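(* Let $\Sigma\subset\mathbb C^n$ be a smooth hypersurface bounding a compact domain, and $Z$ a vector field defined near $\Sigma$ such that $iZ$ is tangent to $\Sigma$. Let $\xi_{\mathbb C}=T\Sigma\cap iT\Sigma$ and let $\beta\in\Omega^1(\Sigma)$ be the one-form with $\ker\beta=\xi_{\mathbb C}$ and $\beta(iZ|_\Sigma)=1$. Assume $\Sigma$ is strictly $i$-convex, i.e. $d\beta(v,iv)>0$ for all nonzero $v\in\xi_{\mathbb C}$, so that $\beta$ is a contact form with Reeb vector field $R_\beta$. If $Z$ is a holomorphic vector field, then $R_\beta=iZ$ on $\Sigma$.
   Context: $i$ denotes the standard complex structure on $\mathbb C^n$. The Reeb vector field $R_\beta$ is characterized by $d\beta(R_\beta,\cdot)=0$ and $\beta(R_\beta)=1$. A holomorphic vector field is one whose flow acts by (local) biholomorphisms. *)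

theory Defs
  imports "HOL-Analysis.Analysis"
begin

text \<open>In finite dimensions, continuity of all directional derivatives x -> f' x v is
  equivalent to continuity of the Frechet derivative.\<close>
fun Ck_on :: "nat \<Rightarrow> 'a::real_normed_vector set \<Rightarrow> ('a \<Rightarrow> 'b::real_normed_vector) \<Rightarrow> bool" where
  "Ck_on 0 U f = continuous_on U f"
| "Ck_on (Suc k) U f = (\<exists>f'. (\<forall>x\<in>U. (f has_derivative f' x) (at x)) \<and> (\<forall>v. Ck_on k U (\<lambda>x. f' x v)))"

definition smooth_on :: "'a::real_normed_vector set \<Rightarrow> ('a \<Rightarrow> 'b::real_normed_vector) \<Rightarrow> bool" where
  "smooth_on U f \<longleftrightarrow> (\<forall>k. Ck_on k U f)"

definition cmul_i :: "complex ^ 'n \<Rightarrow> complex ^ 'n" where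
  "cmul_i v = (\<chi> k. \<i> * v $ k)"

definition tangent_sp :: "(complex ^ 'n \<Rightarrow> real) \<Rightarrow> complex ^ 'n \<Rightarrow> (complex ^ 'n) set" where
  "tangent_sp \<rho> p = {v. frechet_derivative \<rho> (at p) v = 0}"

definition cx_tangent :: "(complex ^ 'n \<Rightarrow> real) \<Rightarrow> complex ^ 'n \<Rightarrow> (complex ^ 'n) set" where
  "cx_tangent \<rho> p = {v. v \<in> tangent_sp \<rho> p \<and> cmul_i v \<in> tangent_sp \<rho> p}"

text \<open>Exterior derivative of a 1-form B (given as p -> linear functional):
  dB_p(v,w) = D(B(.) w)_p v - D(B(.) v)_p w (constant vector fields v, w).\<close>
definition d_form :: "(complex ^ 'n \<Rightarrow> complex ^ 'n \<Rightarrow> real) \<Rightarrow> complex ^ 'n \<Rightarrow> complex ^ 'n \<Rightarrow> complex ^ 'n \<Rightarrow> real" where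
  "d_form B p v w = frechet_derivative (\<lambda>q. B q w) (at p) v - frechet_derivative (\<lambda>q. B q v) (at p) w"

definition holomorphic_vf :: "(complex ^ 'n) set \<Rightarrow> (complex ^ 'n \<Rightarrow> complex ^ 'n) \<Rightarrow> bool" where
  "holomorphic_vf U Z \<longleftrightarrow> (\<forall>p\<in>U. Z differentiable (at p) \<and>
      (\<forall>v. frechet_derivative Z (at p) (cmul_i v) = cmul_i (frechet_derivative Z (at p) v)))"

definition reeb_at :: "(complex ^ 'n \<Rightarrow> real) \<Rightarrow> (complex ^ 'n \<Rightarrow> complex ^ 'n \<Rightarrow> real) \<Rightarrow> complex ^ 'n \<Rightarrow> complex ^ 'n \<Rightarrow> bool" where
  "reeb_at \<rho> B p R \<longleftrightarrow> R \<in> tangent_sp \<rho> p \<and> B p R = 1 \<and> (\<forall>v\<in>tangent_sp \<rho> p. d_form B p R v = 0)"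

end

theory Submission
  imports Defs
begin


lemma line_deriv:
  fixes f :: "'a::real_normed_vector \<Rightarrow> real"
  assumes "(f has_derivative F) (at (x + s *\<^sub>R a))"
  shows "((\<lambda>s. f (x + s *\<^sub>R a)) has_field_derivative F a) (at s)"
proof -
  have "((\<lambda>s. x + s *\<^sub>R a) has_derivative (\<lambda>h. h *\<^sub>R a)) (at s)"
    by (auto intro!: derivative_eq_intros)
  from has_derivative_compose[OF this assms]
  have "((\<lambda>s. f (x + s *\<^sub>R a)) has_derivative (\<lambda>h. F (h *\<^sub>R a))) (at s)" .
  moreover have "(\<lambda>h. F (h *\<^sub>R a)) = (*) (F a)"
    using linear_cmul[OF has_derivative_linear[OF assms]] by auto
  ultimately show ?thesis by (simp add: has_field_derivative_def)
qed

lemma schwarz_aux: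
  fixes f :: "'a::real_normed_vector \<Rightarrow> real"
  assumes sub: "ball p d \<subseteq> U"
   and f': "\<And>x. x\<in>U \<Longrightarrow> (f has_derivative f' x) (at x)"
   and f'': "\<And>x v. x\<in>U \<Longrightarrow> ((\<lambda>y. f' y v) has_derivative f'' v x) (at x)"
   and t: "t > 0" "t * (norm a + norm b) < d"
  shows "\<exists>x\<in>ball p d. f (p + t*\<^sub>R a + t*\<^sub>R b) - f (p + t*\<^sub>R a) - f (p + t*\<^sub>R b) + f p = t^2 * f'' a x b"
proof -
  have inb: "p + s*\<^sub>R a + \<tau>*\<^sub>R b \<in> ball p d" if "0\<le>s" "s\<le>t" "0\<le>\<tau>" "\<tau>\<le>t" for s \<tau>
  proof -
    have "norm (s*\<^sub>R a + \<tau>*\<^sub>R b) \<le> s * norm a + \<tau> * norm b"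
      using that norm_triangle_ineq[of "s*\<^sub>R a" "\<tau>*\<^sub>R b"] by simp
    also have "\<dots> \<le> t * norm a + t * norm b"
      using that by (intro add_mono mult_right_mono) auto
    finally have "norm (s*\<^sub>R a + \<tau>*\<^sub>R b) < d" using t by (metis distrib_left order_le_less_trans)
    moreover have "dist p (p + s*\<^sub>R a + \<tau>*\<^sub>R b) = norm (s*\<^sub>R a + \<tau>*\<^sub>R b)"
      by (metis add.assoc add.right_neutral dist_add_cancel dist_0_norm)
    ultimately show ?thesis by simp
  qed
  define g where "g s = f ((p + t*\<^sub>R b) + s*\<^sub>R a) - f (p + s*\<^sub>R a)" for s
  have dg: "DERIV g s :> (f' ((p + t*\<^sub>R b) + s*\<^sub>R a) a - f' (p + s*\<^sub>R a) a)" if "0 \<le> s" "s \<le> t" for s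
  proof -
    have m1: "(p + t*\<^sub>R b) + s*\<^sub>R a \<in> U" using inb[of s t] that t sub by (auto simp: algebra_simps)
    have m2: "p + s*\<^sub>R a \<in> U" using inb[of s 0] that t sub by auto
    show ?thesis unfolding g_def
      by (intro DERIV_diff line_deriv f' m1 m2)
  qed
  obtain \<sigma> where \<sigma>: "0 < \<sigma>" "\<sigma> < t" "g t - g 0 = (t - 0) * (f' ((p + t*\<^sub>R b) + \<sigma>*\<^sub>R a) a - f' (p + \<sigma>*\<^sub>R a) a)"
    using MVT2[OF t(1), of g, OF dg] by auto
  define h where "h \<tau> = f' ((p + \<sigma>*\<^sub>R a) + \<tau>*\<^sub>R b) a" for \<tau>
  have dh: "DERIV h \<tau> :> f'' a ((p + \<sigma>*\<^sub>R a) + \<tau>*\<^sub>R b) b" if "0 \<le> \<tau>" "\<tau> \<le> t" for \<tau>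
  proof -
    have m1: "(p + \<sigma>*\<^sub>R a) + \<tau>*\<^sub>R b \<in> U" using inb[of \<sigma> \<tau>] that \<sigma> sub by auto
    show ?thesis unfolding h_def by (intro line_deriv f'' m1)
  qed
  obtain \<tau> where \<tau>: "0 < \<tau>" "\<tau> < t" "h t - h 0 = (t - 0) * f'' a ((p + \<sigma>*\<^sub>R a) + \<tau>*\<^sub>R b) b"
    using MVT2[OF t(1), of h, OF dh] by auto
  have "f (p + t*\<^sub>R a + t*\<^sub>R b) - f (p + t*\<^sub>R a) - f (p + t*\<^sub>R b) + f p = g t - g 0"
    by (simp add: g_def algebra_simps)
  also have "\<dots> = t * (h t - h 0)" using \<sigma>(3) by (simp add: h_def algebra_simps)
  also have "\<dots> = t^2 * f'' a ((p + \<sigma>*\<^sub>R a) + \<tau>*\<^sub>R b) b" using \<tau>(3) by (simp add: power2_eq_square)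
  finally show ?thesis using inb[of \<sigma> \<tau>] \<sigma> \<tau> by (intro bexI) auto
qed

lemma schwarz:
  fixes f :: "'a::real_normed_vector \<Rightarrow> real"
  assumes U: "open U" "p \<in> U"
   and f': "\<And>x. x\<in>U \<Longrightarrow> (f has_derivative f' x) (at x)"
   and f'': "\<And>x v. x\<in>U \<Longrightarrow> ((\<lambda>y. f' y v) has_derivative f'' v x) (at x)"
   and c: "\<And>v w. continuous_on U (\<lambda>x. f'' v x w)"
  shows "f'' a p b = f'' b p a"
proof (rule ccontr)
  assume ne: "f'' a p b \<noteq> f'' b p a"
  define e where "e = \<bar>f'' a p b - f'' b p a\<bar> / 2"
  have e: "e > 0" using ne by (simp add: e_def)
  have ca: "isCont (\<lambda>x. f'' a x b) p" and cb: "isCont (\<lambda>x. f'' b x a) p"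
    using c U continuous_on_eq_continuous_at by blast+
  obtain d1 where d1: "d1 > 0" "\<forall>x. dist x p < d1 \<longrightarrow> dist (f'' a x b) (f'' a p b) < e"
    using ca e unfolding continuous_at_eps_delta by blast
  obtain d2 where d2: "d2 > 0" "\<forall>x. dist x p < d2 \<longrightarrow> dist (f'' b x a) (f'' b p a) < e"
    using cb e unfolding continuous_at_eps_delta by blast
  obtain d3 where d3: "d3 > 0" "ball p d3 \<subseteq> U" using U open_contains_ball by blast
  define d where "d = min d1 (min d2 d3)"
  have d: "d > 0" "ball p d \<subseteq> U" using d1 d2 d3 by (auto simp: d_def)
  define t where "t = d / (2 * (norm a + norm b + 1))"
  have t: "t > 0" "t * (norm a + norm b) < d"
  proof -
    have pos: "norm a + norm b + 1 > 0" by (simp add: add_nonneg_pos)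
    show "t > 0" using d pos by (simp add: t_def)
    have "t * (norm a + norm b) < t * (norm a + norm b + 1) * 2"
    proof -
      have "0 \<le> t * norm a" "0 \<le> t * norm b" using \<open>t>0\<close> by simp_all
      moreover have "t*(norm a+norm b+1)*2 = t*(norm a + norm b) + (t*norm a + t * norm b + 2*t)" by (simp add: algebra_simps)
      ultimately show ?thesis using \<open>t>0\<close> by linarith
    qed
    also have "\<dots> = d" using pos by (simp add: t_def field_simps)
    finally show "t * (norm a + norm b) < d" .
  qed
  obtain x where x: "x \<in> ball p d" "f (p + t*\<^sub>R a + t*\<^sub>R b) - f (p + t*\<^sub>R a) - f (p + t*\<^sub>R b) + f p = t^2 * f'' a x b"
    using schwarz_aux[OF d(2) f' f'' t] by blast
  obtain y where y: "y \<in> ball p d" "f (p + t*\<^sub>R b + t*\<^sub>R a) - f (p + t*\<^sub>R b) - f (p + t*\<^sub>R a) + f p = t^2 * f'' b y a"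
    using schwarz_aux[OF d(2) f' f'', of t b a] t by (auto simp: add.commute)
  have "t^2 * f'' a x b = t^2 * f'' b y a" using x(2) y(2) by (simp add: algebra_simps)
  hence xy: "f'' a x b = f'' b y a" using t by simp
  have "dist (f'' a x b) (f'' a p b) < e" using d1 x(1) by (auto simp: d_def dist_commute)
  moreover have "dist (f'' b y a) (f'' b p a) < e" using d2 y(1) by (auto simp: d_def dist_commute)
  moreover have "\<bar>f'' a p b - f'' b p a\<bar> \<le> \<bar>f'' b y a - f'' a p b\<bar> + \<bar>f'' b y a - f'' b p a\<bar>"
    by (rule order_trans[OF _ abs_triangle_ineq4]) simp
  ultimately show False using xy by (simp add: e_def dist_real_def)
qed



lemma dist_self_plus: "dist p (p + w) = norm w"
  by (metis add.right_neutral dist_add_cancel dist_0_norm)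

lemma tangent_kill_pos:
  fixes \<rho> \<phi> :: "'a::real_normed_vector \<Rightarrow> real"
  assumes U: "open U" "p \<in> U" and \<rho>p: "\<rho> p = 0"
   and cont: "continuous_on U \<rho>"
   and dL: "(\<rho> has_derivative L) (at p)" and Lv: "L v = 0" and LN: "L N > 0"
   and dM: "(\<phi> has_derivative M) (at p)"
   and r: "r > 0" and van: "\<And>q. q \<in> U \<Longrightarrow> dist q p < r \<Longrightarrow> \<rho> q = 0 \<Longrightarrow> \<phi> q = \<phi> p"
  shows "M v = 0"
proof (rule ccontr)
  assume Mv: "M v \<noteq> 0"
  define m where "m = \<bar>M v\<bar>"
  have m: "m > 0" using Mv by (simp add: m_def)
  define c where "c = L N"
  have c: "c > 0" using LN by (simp add: c_def)
  define \<epsilon> where "\<epsilon> = m / (4 * (\<bar>M N\<bar> + 1))"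
  have \<epsilon>: "\<epsilon> > 0" using m by (simp add: \<epsilon>_def add_nonneg_pos)
  have \<epsilon>M: "\<epsilon> * \<bar>M N\<bar> < m / 4"
  proof -
    have "\<epsilon> * \<bar>M N\<bar> < \<epsilon> * (\<bar>M N\<bar> + 1)" using \<epsilon> by simp
    also have "\<dots> = m / 4" by (simp add: \<epsilon>_def field_simps add_nonneg_pos)
    finally show ?thesis .
  qed
  define K where "K = norm v + \<epsilon> * norm N"
  have K: "K \<ge> 0" using \<epsilon> by (simp add: K_def)
  define \<eta> where "\<eta> = min (\<epsilon> * c / (2 * (K + 1))) (m / (4 * (K + 1)))"
  have \<eta>: "\<eta> > 0" using \<epsilon> c m K by (simp add: \<eta>_def)
  have \<eta>K1: "\<eta> * K < \<epsilon> * c / 2"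
  proof -
    have "\<eta> * K \<le> \<epsilon> * c / (2 * (K + 1)) * K" using K by (intro mult_right_mono) (auto simp: \<eta>_def)
    also have "\<dots> < \<epsilon> * c / 2" using K \<epsilon> c by (simp add: field_simps)
    finally show ?thesis .
  qed
  have \<eta>K2: "\<eta> * K < m / 4"
  proof -
    have "\<eta> * K \<le> m / (4 * (K + 1)) * K" using K by (intro mult_right_mono) (auto simp: \<eta>_def)
    also have "\<dots> < m / 4" using K m by (simp add: field_simps)
    finally show ?thesis .
  qed
  obtain d1 where d1: "d1 > 0" "\<And>y. norm (y - p) < d1 \<Longrightarrow> norm (\<rho> y - \<rho> p - L (y - p)) \<le> \<eta> * norm (y - p)"
    using dL \<eta> unfolding has_derivative_at_alt by blast
  obtain d2 where d2: "d2 > 0" "\<And>y. norm (y - p) < d2 \<Longrightarrow> norm (\<phi> y - \<phi> p - M (y - p)) \<le> \<eta> * norm (y - p)"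
    using dM \<eta> unfolding has_derivative_at_alt by blast
  obtain d3 where d3: "d3 > 0" "ball p d3 \<subseteq> U" using U open_contains_ball by blast
  define d where "d = min (min d1 d2) (min d3 r)"
  have d: "d > 0" using d1 d2 d3 r by (simp add: d_def)
  define t where "t = d / (2 * (K + 1))"
  have t: "t > 0" using d K by (simp add: t_def)
  have tK: "t * K < d"
  proof -
    have "0 \<le> K * t" using t K by simp
    hence "t * K < t * (2 * (K + 1))" using t by (simp add: field_simps)
    also have "\<dots> = d" using K by (simp add: t_def)
    finally show ?thesis .
  qed
  have linL: "linear L" using dL by (rule has_derivative_linear)
  have linM: "linear M" using dM by (rule has_derivative_linear)
  have hn: "norm (t *\<^sub>R v + s *\<^sub>R N) < d" if "\<bar>s\<bar> \<le> \<epsilon> * t" for s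
  proof -
    have "norm (t *\<^sub>R v + s *\<^sub>R N) \<le> t * norm v + \<bar>s\<bar> * norm N"
      using norm_triangle_ineq[of "t *\<^sub>R v" "s *\<^sub>R N"] t by simp
    also have "\<dots> \<le> t * norm v + \<epsilon> * t * norm N" using that by (intro add_left_mono mult_right_mono) auto
    also have "\<dots> = t * K" by (simp add: K_def algebra_simps)
    finally show ?thesis using tK by simp
  qed
  have hnK: "norm (t *\<^sub>R v + s *\<^sub>R N) \<le> t * K" if "\<bar>s\<bar> \<le> \<epsilon> * t" for s
  proof -
    have "norm (t *\<^sub>R v + s *\<^sub>R N) \<le> t * norm v + \<bar>s\<bar> * norm N"
      using norm_triangle_ineq[of "t *\<^sub>R v" "s *\<^sub>R N"] t by simp
    also have "\<dots> \<le> t * norm v + \<epsilon> * t * norm N" using that by (intro add_left_mono mult_right_mono) auto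
    also have "\<dots> = t * K" by (simp add: K_def algebra_simps)
    finally show ?thesis .
  qed
  have inU: "p + (t *\<^sub>R v + s *\<^sub>R N) \<in> U" if "\<bar>s\<bar> \<le> \<epsilon> * t" for s
  proof -
    have "dist p (p + (t *\<^sub>R v + s *\<^sub>R N)) < d3"
      using hn[OF that] by (simp add: d_def dist_self_plus)
    thus ?thesis using d3 by auto
  qed
  have Lh: "L (t *\<^sub>R v + s *\<^sub>R N) = s * c" for s
    using Lv by (simp add: linear_add[OF linL] linear_cmul[OF linL] c_def)
  have \<rho>est: "\<bar>\<rho> (p + (t *\<^sub>R v + s *\<^sub>R N)) - s * c\<bar> \<le> \<eta> * (t * K)" if "\<bar>s\<bar> \<le> \<epsilon> * t" for s
  proof -
    have "norm (t *\<^sub>R v + s *\<^sub>R N) < d1" using hn[OF that] by (simp add: d_def)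
    from d1(2)[of "p + (t *\<^sub>R v + s *\<^sub>R N)"] this
    have "\<bar>\<rho> (p + (t *\<^sub>R v + s *\<^sub>R N)) - s * c\<bar> \<le> \<eta> * norm (t *\<^sub>R v + s *\<^sub>R N)"
      using \<rho>p Lh by simp
    also have "\<dots> \<le> \<eta> * (t * K)" using \<eta> hnK[OF that] by (intro mult_left_mono) auto
    finally show ?thesis .
  qed
  define g where "g s = \<rho> (p + (t *\<^sub>R v + s *\<^sub>R N))" for s
  have et: "\<bar>\<epsilon> * t\<bar> \<le> \<epsilon> * t" "\<bar>- (\<epsilon> * t)\<bar> \<le> \<epsilon> * t" using \<epsilon> t by auto
  have "g (- (\<epsilon> * t)) \<le> 0"
  proof -
    have ec: "\<eta> * K \<le> \<epsilon> * c" proof -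
      have "0 < \<epsilon> * c" using \<epsilon> c by simp
      thus ?thesis using \<eta>K1 by linarith
    qed
    have "\<eta> * (t * K) = t * (\<eta> * K)" by simp
    also have "\<dots> \<le> t * (\<epsilon> * c)" using ec t by (intro mult_left_mono) auto
    finally have "\<eta> * (t * K) \<le> \<epsilon> * t * c" by (simp add: ac_simps)
    thus ?thesis using \<rho>est[OF et(2)] by (simp add: g_def) 
  qed
  moreover have "0 \<le> g (\<epsilon> * t)"
  proof -
    have ec: "\<eta> * K \<le> \<epsilon> * c" proof -
      have "0 < \<epsilon> * c" using \<epsilon> c by simp
      thus ?thesis using \<eta>K1 by linarith
    qed
    have "\<eta> * (t * K) = t * (\<eta> * K)" by simp
    also have "\<dots> \<le> t * (\<epsilon> * c)" using ec t by (intro mult_left_mono) auto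
    finally have "\<eta> * (t * K) \<le> \<epsilon> * t * c" by (simp add: ac_simps)
    thus ?thesis using \<rho>est[OF et(1)] by (simp add: g_def) 
  qed
  moreover have "- (\<epsilon> * t) \<le> \<epsilon> * t" using \<epsilon> t by simp
  moreover have "continuous_on {- (\<epsilon> * t) .. \<epsilon> * t} g"
  proof -
    have "continuous_on {- (\<epsilon> * t) .. \<epsilon> * t} (\<lambda>s. p + (t *\<^sub>R v + s *\<^sub>R N))"
      by (intro continuous_intros)
    moreover have "(\<lambda>s. p + (t *\<^sub>R v + s *\<^sub>R N)) ` {- (\<epsilon> * t) .. \<epsilon> * t} \<subseteq> U"
      using inU by auto
    ultimately show ?thesis unfolding g_def
      using continuous_on_compose2[OF cont] by blast
  qed
  ultimately obtain s0 where s0: "- (\<epsilon> * t) \<le> s0" "s0 \<le> \<epsilon> * t" "g s0 = 0"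
    using IVT'[of g "- (\<epsilon> * t)" 0 "\<epsilon> * t"] by blast
  have s0a: "\<bar>s0\<bar> \<le> \<epsilon> * t" using s0 by auto
  define q where "q = p + (t *\<^sub>R v + s0 *\<^sub>R N)"
  have "\<phi> q = \<phi> p"
  proof (rule van)
    show "q \<in> U" using inU[OF s0a] by (simp add: q_def)
    show "dist q p < r" using hn[OF s0a] by (simp add: q_def d_def dist_norm)
    show "\<rho> q = 0" using s0 by (simp add: q_def g_def)
  qed
  moreover have "norm (q - p) < d2" using hn[OF s0a] by (simp add: q_def d_def)
  ultimately have "\<bar>M (t *\<^sub>R v + s0 *\<^sub>R N)\<bar> \<le> \<eta> * norm (t *\<^sub>R v + s0 *\<^sub>R N)"
    using d2(2)[of q] by (simp add: q_def)
  also have "\<dots> \<le> \<eta> * (t * K)" using \<eta> hnK[OF s0a] by (intro mult_left_mono) auto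
  finally have A: "\<bar>t * M v + s0 * M N\<bar> \<le> \<eta> * (t * K)"
    by (simp add: linear_add[OF linM] linear_cmul[OF linM])
  have "t * m \<le> \<bar>t * M v + s0 * M N\<bar> + \<bar>s0\<bar> * \<bar>M N\<bar>"
    using t abs_triangle_ineq4[of "t * M v + s0 * M N" "s0 * M N"] by (simp add: m_def abs_mult)
  also have "\<dots> \<le> \<eta> * (t * K) + \<epsilon> * t * \<bar>M N\<bar>"
    using A s0a by (intro add_mono mult_right_mono) auto
  also have "\<dots> = t * (\<eta> * K + \<epsilon> * \<bar>M N\<bar>)" by (simp add: algebra_simps)
  finally have "m \<le> \<eta> * K + \<epsilon> * \<bar>M N\<bar>" using t by simp
  thus False using \<eta>K2 \<epsilon>M m by linarith
qed



lemma lin_expand: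
  fixes f :: "'a::euclidean_space \<Rightarrow> real"
  assumes "linear f"
  shows "f v = (\<Sum>b\<in>Basis. (v \<bullet> b) * f b)"
proof -
  have "f v = f (\<Sum>b\<in>Basis. (v \<bullet> b) *\<^sub>R b)" by (simp add: euclidean_representation)
  also have "\<dots> = (\<Sum>b\<in>Basis. (v \<bullet> b) * f b)"
    by (simp add: linear_sum[OF assms] linear_cmul[OF assms] o_def)
  finally show ?thesis .
qed

lemma fd_lin:
  fixes C :: "'a::euclidean_space \<Rightarrow> 'a \<Rightarrow> real"
  assumes U: "open U" "p \<in> U" and lin: "\<forall>q\<in>U. linear (C q)"
    and dC: "\<And>v. (\<lambda>q. C q v) differentiable (at p)"
  shows "frechet_derivative (\<lambda>q. C q v) (at p) = (\<lambda>h. \<Sum>b\<in>Basis. (v \<bullet> b) * frechet_derivative (\<lambda>q. C q b) (at p) h)"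
proof -
  have aux: "(\<Sum>b\<in>Basis. (w \<bullet> b) * C q b) = C q w" if "q \<in> U" for q w
    using lin_expand[of "C q" w] lin that by simp
  have "((\<lambda>q. \<Sum>b\<in>Basis. (v \<bullet> b) * C q b) has_derivative
          (\<lambda>h. \<Sum>b\<in>Basis. (v \<bullet> b) * frechet_derivative (\<lambda>q. C q b) (at p) h)) (at p)"
    using dC by (intro has_derivative_sum has_derivative_mult_right frechet_derivative_works[THEN iffD1])
  hence "((\<lambda>q. C q v) has_derivative
          (\<lambda>h. \<Sum>b\<in>Basis. (v \<bullet> b) * frechet_derivative (\<lambda>q. C q b) (at p) h)) (at p)"
    by (rule has_derivative_transform_within_open[OF _ U]) (use aux in auto)
  thus ?thesis by (rule frechet_derivative_at[symmetric])
qed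

lemma fd_prod:
  fixes C :: "'a::euclidean_space \<Rightarrow> 'a \<Rightarrow> real"
  assumes U: "open U" "p \<in> U" and lin: "\<forall>q\<in>U. linear (C q)"
    and dC: "\<And>v. (\<lambda>q. C q v) differentiable (at p)"
    and dW: "(W has_derivative W') (at p)"
  shows "((\<lambda>q. C q (W q)) has_derivative (\<lambda>h. C p (W' h) + frechet_derivative (\<lambda>q. C q (W p)) (at p) h)) (at p)"
proof -
  have aux: "(\<Sum>b\<in>Basis. (w \<bullet> b) * C q b) = C q w" if "q \<in> U" for q w
    using lin_expand[of "C q" w] lin that by simp
  have "((\<lambda>q. \<Sum>b\<in>Basis. (W q \<bullet> b) * C q b) has_derivative
          (\<lambda>h. \<Sum>b\<in>Basis. (W p \<bullet> b) * frechet_derivative (\<lambda>q. C q b) (at p) h + (W' h \<bullet> b) * C p b)) (at p)"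
    using dC dW by (intro has_derivative_sum has_derivative_mult frechet_derivative_works[THEN iffD1]
        has_derivative_inner_left)
  hence "((\<lambda>q. C q (W q)) has_derivative
          (\<lambda>h. \<Sum>b\<in>Basis. (W p \<bullet> b) * frechet_derivative (\<lambda>q. C q b) (at p) h + (W' h \<bullet> b) * C p b)) (at p)"
    by (rule has_derivative_transform_within_open[OF _ U]) (use aux in auto)
  moreover have "(\<lambda>h. \<Sum>b\<in>Basis. (W p \<bullet> b) * frechet_derivative (\<lambda>q. C q b) (at p) h + (W' h \<bullet> b) * C p b)
      = (\<lambda>h. C p (W' h) + frechet_derivative (\<lambda>q. C q (W p)) (at p) h)"
  proof
    fix h
    have lp: "linear (C p)" using lin U by auto
    have "(\<Sum>b\<in>Basis. (W p \<bullet> b) * frechet_derivative (\<lambda>q. C q b) (at p) h + (W' h \<bullet> b) * C p b)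
        = (\<Sum>b\<in>Basis. (W p \<bullet> b) * frechet_derivative (\<lambda>q. C q b) (at p) h) + (\<Sum>b\<in>Basis. (W' h \<bullet> b) * C p b)"
      by (rule sum.distrib)
    also have "(\<Sum>b\<in>Basis. (W' h \<bullet> b) * C p b) = C p (W' h)"
      by (rule lin_expand[OF lp, symmetric])
    also have "(\<Sum>b\<in>Basis. (W p \<bullet> b) * frechet_derivative (\<lambda>q. C q b) (at p) h) = frechet_derivative (\<lambda>q. C q (W p)) (at p) h"
      by (subst fd_lin[OF U lin dC, of "W p"]) (rule refl)
    finally show "(\<Sum>b\<in>Basis. (W p \<bullet> b) * frechet_derivative (\<lambda>q. C q b) (at p) h + (W' h \<bullet> b) * C p b)
      = C p (W' h) + frechet_derivative (\<lambda>q. C q (W p)) (at p) h" by simp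
  qed
  ultimately show ?thesis by simp
qed



lemma tangent_kill:
  fixes \<rho> \<phi> :: "'a::real_normed_vector \<Rightarrow> real"
  assumes U: "open U" "p \<in> U" and \<rho>p: "\<rho> p = 0"
   and cont: "continuous_on U \<rho>"
   and dL: "(\<rho> has_derivative L) (at p)" and Lv: "L v = 0" and LN: "L N \<noteq> 0"
   and dM: "(\<phi> has_derivative M) (at p)"
   and r: "r > 0" and van: "\<And>q. q \<in> U \<Longrightarrow> dist q p < r \<Longrightarrow> \<rho> q = 0 \<Longrightarrow> \<phi> q = \<phi> p"
  shows "M v = 0"
proof (cases "L N > 0")
  case True
  show ?thesis by (rule tangent_kill_pos[OF U \<rho>p cont dL Lv True dM r van])
next
  case False
  hence "L (- N) > 0" using LN linear_neg[OF has_derivative_linear[OF dL]] by auto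
  show ?thesis by (rule tangent_kill_pos[OF U \<rho>p cont dL Lv \<open>L (- N) > 0\<close> dM r van])
qed

lemma cmul_i_linear: "linear cmul_i"
  by (auto simp: linear_iff cmul_i_def vec_eq_iff algebra_simps scaleR_conv_of_real)

lemma cmul_i_bl: "bounded_linear cmul_i"
  using cmul_i_linear linear_conv_bounded_linear by blast

lemma cmul_i_twice [simp]: "cmul_i (cmul_i v) = - v"
  by (simp add: cmul_i_def vec_eq_iff)

lemma cmul_i_diff: "cmul_i (a - b) = cmul_i a - cmul_i b"
  using linear_diff[OF cmul_i_linear] .

lemma d_form_expand:
  fixes B :: "complex ^ 'n \<Rightarrow> complex ^ 'n \<Rightarrow> real"
  assumes U: "open U" "p \<in> U" and lin: "\<forall>q\<in>U. linear (B q)"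
    and dC: "\<And>v. (\<lambda>q. B q v) differentiable (at p)"
  shows "d_form B p x y = (\<Sum>b\<in>Basis. (y \<bullet> b) * frechet_derivative (\<lambda>q. B q b) (at p) x)
          - (\<Sum>b\<in>Basis. (x \<bullet> b) * frechet_derivative (\<lambda>q. B q b) (at p) y)"
proof -
  have e1: "frechet_derivative (\<lambda>q. B q y) (at p) x = (\<Sum>b\<in>Basis. (y \<bullet> b) * frechet_derivative (\<lambda>q. B q b) (at p) x)"
    by (subst fd_lin[OF U lin dC, of y]) (rule refl)
  have e2: "frechet_derivative (\<lambda>q. B q x) (at p) y = (\<Sum>b\<in>Basis. (x \<bullet> b) * frechet_derivative (\<lambda>q. B q b) (at p) y)"
    by (subst fd_lin[OF U lin dC, of x]) (rule refl)
  show ?thesis unfolding d_form_def e1 e2 ..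
qed

lemma d_form_bilin:
  fixes B :: "complex ^ 'n \<Rightarrow> complex ^ 'n \<Rightarrow> real"
  assumes U: "open U" "p \<in> U" and lin: "\<forall>q\<in>U. linear (B q)"
    and dC: "\<And>v. (\<lambda>q. B q v) differentiable (at p)"
  shows "linear (d_form B p x)" "linear (\<lambda>x. d_form B p x y)"
proof -
  define F where "F b = frechet_derivative (\<lambda>q. B q b) (at p)" for b
  have lF: "linear (F b)" for b
    unfolding F_def using dC[of b] frechet_derivative_works has_derivative_linear by blast
  have ex: "d_form B p x y = (\<Sum>b\<in>Basis. (y \<bullet> b) * F b x) - (\<Sum>b\<in>Basis. (x \<bullet> b) * F b y)" for x y
    unfolding F_def by (rule d_form_expand[OF U lin dC])
  show "linear (d_form B p x)"
    unfolding ex linear_iff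
    by (auto simp: inner_add_left linear_add[OF lF] linear_cmul[OF lF] sum.distrib sum_distrib_left
        algebra_simps)
  show "linear (\<lambda>x. d_form B p x y)"
    unfolding ex linear_iff
    by (auto simp: inner_add_left linear_add[OF lF] linear_cmul[OF lF] sum.distrib sum_distrib_left
        algebra_simps)
qed



theorem mainTheorem6:
  fixes \<rho> :: "complex ^ 'n \<Rightarrow> real"
    and Z :: "complex ^ 'n \<Rightarrow> complex ^ 'n"
    and B :: "complex ^ 'n \<Rightarrow> complex ^ 'n \<Rightarrow> real"
    and U D \<Sigma> :: "(complex ^ 'n) set"
  assumes U_open: "open U"
    and \<rho>_smooth: "smooth_on U \<rho>"
    and \<Sigma>_def: "\<Sigma> = {p \<in> U. \<rho> p = 0}"
    and \<Sigma>_regular: "\<forall>p\<in>\<Sigma>. frechet_derivative \<rho> (at p) \<noteq> (\<lambda>v. 0)"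
    and D_compact: "compact D"
    and \<Sigma>_boundary: "frontier D = \<Sigma>"
    and Z_smooth: "smooth_on U Z"
    and iZ_tangent: "\<forall>p\<in>\<Sigma>. cmul_i (Z p) \<in> tangent_sp \<rho> p"
    and B_linear: "\<forall>p\<in>U. linear (B p)"
    and B_smooth: "\<forall>v. smooth_on U (\<lambda>p. B p v)"
    and \<beta>_kernel: "\<forall>p\<in>\<Sigma>. \<forall>v\<in>tangent_sp \<rho> p. B p v = 0 \<longleftrightarrow> v \<in> cx_tangent \<rho> p"
    and \<beta>_iZ: "\<forall>p\<in>\<Sigma>. B p (cmul_i (Z p)) = 1"
    and strictly_i_convex:
      "\<forall>p\<in>\<Sigma>. \<forall>v\<in>cx_tangent \<rho> p. v \<noteq> 0 \<longrightarrow> d_form B p v (cmul_i v) > 0"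
    and Z_holo: "holomorphic_vf U Z"
  shows "(\<forall>p\<in>\<Sigma>. reeb_at \<rho> B p (cmul_i (Z p))) \<and>
         (\<forall>R. (\<forall>p\<in>\<Sigma>. reeb_at \<rho> B p (R p)) \<longrightarrow> (\<forall>p\<in>\<Sigma>. R p = cmul_i (Z p)))"
proof -
  have \<Sigma>U: "p \<in> U" "\<rho> p = 0" if "p \<in> \<Sigma>" for p using that \<Sigma>_def by auto
  have "Ck_on (Suc (Suc 0)) U \<rho>" using \<rho>_smooth unfolding smooth_on_def by blast
  then obtain f' where f': "\<forall>x\<in>U. (\<rho> has_derivative f' x) (at x)"
      and "\<forall>v. \<exists>g. (\<forall>x\<in>U. ((\<lambda>x. f' x v) has_derivative g x) (at x)) \<and> (\<forall>w. continuous_on U (\<lambda>x. g x w))"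
    by auto
  then obtain f'' where f'': "\<forall>v. \<forall>x\<in>U. ((\<lambda>x. f' x v) has_derivative f'' v x) (at x)"
      and cf'': "\<forall>v w. continuous_on U (\<lambda>x. f'' v x w)"
    by metis
  have fd: "frechet_derivative \<rho> (at x) = f' x" if "x \<in> U" for x
    using f' that frechet_derivative_at by metis
  have fd2: "frechet_derivative (\<lambda>y. f' y v) (at x) = f'' v x" if "x \<in> U" for x v
    using f'' that frechet_derivative_at by metis
  have linf': "\<forall>q\<in>U. linear (f' q)" using f' has_derivative_linear by blast
  have df': "(\<lambda>q. f' q v) differentiable (at x)" if "x \<in> U" for x v
    using f'' that differentiable_def by blast
  have sym: "f'' a x b = f'' b x a" if "x \<in> U" for x a b
    by (rule schwarz[OF U_open that]) (use f' f'' cf'' in auto)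
  have cont\<rho>: "continuous_on U \<rho>"
    using f' by (intro has_derivative_continuous_on) (auto intro: has_derivative_at_withinI)
  have dB: "(\<lambda>q. B q v) differentiable (at x)" if "x \<in> U" for x v
  proof -
    have "Ck_on (Suc 0) U (\<lambda>p. B p v)" using B_smooth unfolding smooth_on_def by blast
    thus ?thesis using that differentiable_def by auto
  qed
  have tsp: "tangent_sp \<rho> q = {v. f' q v = 0}" if "q \<in> U" for q
    using fd[OF that] by (simp add: tangent_sp_def)
  have cxt: "v \<in> cx_tangent \<rho> q \<longleftrightarrow> f' q v = 0 \<and> f' q (cmul_i v) = 0" if "q \<in> U" for q v
    using tsp[OF that] by (simp add: cx_tangent_def)
  have key: "d_form B p (cmul_i (Z p)) v = 0" if p\<Sigma>: "p \<in> \<Sigma>" and v: "v \<in> cx_tangent \<rho> p" for p v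
  proof -
    note pU = \<Sigma>U(1)[OF p\<Sigma>]
    note \<rho>p = \<Sigma>U(2)[OF p\<Sigma>]
    have lp: "linear (f' p)" "linear (B p)" using linf' B_linear pU by auto
    have lq: "linear (f' q)" if "q \<in> U" for q using linf' that by auto
    obtain N where N: "f' p N \<noteq> 0"
      using \<Sigma>_regular p\<Sigma> fd[OF pU] by fastforce
    have vt: "f' p v = 0" "f' p (cmul_i v) = 0" using v cxt[OF pU] by auto
    define P where "P q = f' q N" for q
    define Q where "Q q = f' q (cmul_i N)" for q
    define r1 where "r1 q = f' q v" for q
    define r2 where "r2 q = f' q (cmul_i v)" for q
    define Dn where "Dn q = P q ^ 2 + Q q ^ 2" for q
    define a where "a q = (P q * r1 q + Q q * r2 q) / Dn q" for q
    define b where "b q = (Q q * r1 q - P q * r2 q) / Dn q" for q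
    define W where "W q = v - a q *\<^sub>R N - b q *\<^sub>R cmul_i N" for q
    have "isCont P p" unfolding P_def using f'' pU has_derivative_continuous by blast
    then obtain r0 where r0: "r0 > 0" "\<And>q. dist q p < r0 \<Longrightarrow> dist (P q) (P p) < \<bar>P p\<bar>"
      using N unfolding continuous_at_eps_delta P_def by (metis zero_less_abs_iff)
    have Pq: "P q \<noteq> 0" if "dist q p < r0" for q
      using r0(2)[OF that] by (auto simp: dist_real_def)
    have Dq: "Dn q \<noteq> 0" if "dist q p < r0" for q
      using Pq[OF that] by (simp add: Dn_def add_nonneg_eq_0_iff)
    have Wt: "f' q (W q) = 0 \<and> f' q (cmul_i (W q)) = 0" if qU: "q \<in> U" and qd: "dist q p < r0" for q
    proof
      have "f' q (W q) = r1 q - a q * P q - b q * Q q"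
        by (simp add: W_def r1_def P_def Q_def linear_diff[OF lq[OF qU]] linear_cmul[OF lq[OF qU]])
      also have "\<dots> = 0" using Dq[OF qd] by (simp add: a_def b_def Dn_def field_simps power2_eq_square)
      finally show "f' q (W q) = 0" .
      have "cmul_i (W q) = cmul_i v - a q *\<^sub>R cmul_i N + b q *\<^sub>R N"
        by (simp add: W_def linear_diff[OF cmul_i_linear] linear_cmul[OF cmul_i_linear])
      hence "f' q (cmul_i (W q)) = r2 q - a q * Q q + b q * P q"
        by (simp add: r2_def P_def Q_def linear_diff[OF lq[OF qU]] linear_add[OF lq[OF qU]] linear_cmul[OF lq[OF qU]])
      also have "\<dots> = 0" using Dq[OF qd] by (simp add: a_def b_def Dn_def field_simps power2_eq_square)
      finally show "f' q (cmul_i (W q)) = 0" .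
    qed
    have Wp: "W p = v" using vt by (simp add: W_def a_def b_def r1_def r2_def)
    have dP: "(\<lambda>q. f' q u) differentiable (at p)" for u using df'[OF pU] .
    have "W differentiable (at p)"
      unfolding W_def a_def b_def Dn_def P_def Q_def r1_def r2_def
      using Dq[of p] r0 dP unfolding Dn_def P_def Q_def
      by (intro derivative_intros) auto
    then obtain W' where hW: "(W has_derivative W') (at p)" by (auto simp: differentiable_def)
    have hJW: "((\<lambda>q. cmul_i (W q)) has_derivative (\<lambda>h. cmul_i (W' h))) (at p)"
      by (rule has_derivative_compose[OF hW bounded_linear_imp_has_derivative[OF cmul_i_bl]])
    have Zd: "Z differentiable (at p)" and holo: "\<And>u. frechet_derivative Z (at p) (cmul_i u) = cmul_i (frechet_derivative Z (at p) u)"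
      using Z_holo pU unfolding holomorphic_vf_def by auto
    define Z' where "Z' = frechet_derivative Z (at p)"
    have hZ: "(Z has_derivative Z') (at p)" using Zd frechet_derivative_works Z'_def by blast
    have hX: "((\<lambda>q. cmul_i (Z q)) has_derivative (\<lambda>h. cmul_i (Z' h))) (at p)"
      by (rule has_derivative_compose[OF hZ bounded_linear_imp_has_derivative[OF cmul_i_bl]])
    define X where "X = cmul_i (Z p)"
    have Xt: "f' p X = 0" using iZ_tangent p\<Sigma> tsp[OF pU] by (auto simp: X_def)
    have hL: "(\<rho> has_derivative f' p) (at p)" using f' pU by auto
    note TK = tangent_kill[OF U_open pU \<rho>p cont\<rho> hL _ N _ r0(1)]
    have inS: "q \<in> \<Sigma>" if "q \<in> U" "\<rho> q = 0" for q using that \<Sigma>_def by auto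
    have Bv: "B p v = 0" using \<beta>_kernel p\<Sigma> v by (auto simp: cx_tangent_def)
    have a1: "B p (W' X) + frechet_derivative (\<lambda>q. B q v) (at p) X = 0"
    proof -
      have "(\<lambda>h. B p (W' h) + frechet_derivative (\<lambda>q. B q (W p)) (at p) h) X = 0"
      proof (rule TK[OF Xt fd_prod[OF U_open pU B_linear dB[OF pU] hW]])
        fix q assume q: "q \<in> U" "dist q p < r0" "\<rho> q = 0"
        have "W q \<in> cx_tangent \<rho> q" using Wt[OF q(1,2)] cxt[OF q(1)] by auto
        hence "B q (W q) = 0" using \<beta>_kernel inS[OF q(1,3)] by (auto simp: cx_tangent_def)
        thus "B q (W q) = B p (W p)" using Wp Bv by simp
      qed
      thus ?thesis using Wp by simp
    qed
    have b1: "B p (cmul_i (Z' v)) + frechet_derivative (\<lambda>q. B q X) (at p) v = 0"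
    proof -
      have "(\<lambda>h. B p (cmul_i (Z' h)) + frechet_derivative (\<lambda>q. B q (cmul_i (Z p))) (at p) h) v = 0"
      proof (rule TK[OF vt(1) fd_prod[OF U_open pU B_linear dB[OF pU] hX]])
        fix q assume q: "q \<in> U" "dist q p < r0" "\<rho> q = 0"
        show "B q (cmul_i (Z q)) = B p (cmul_i (Z p))" using \<beta>_iZ inS[OF q(1,3)] p\<Sigma> by simp
      qed
      thus ?thesis by (simp add: X_def)
    qed
    have c1: "f' p (W' X) + f'' v p X = 0"
    proof -
      have "(\<lambda>h. f' p (W' h) + frechet_derivative (\<lambda>q. f' q (W p)) (at p) h) X = 0"
      proof (rule TK[OF Xt fd_prod[OF U_open pU linf' df'[OF pU] hW]])
        fix q assume q: "q \<in> U" "dist q p < r0" "\<rho> q = 0"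
        show "f' q (W q) = f' p (W p)" using Wt[OF q(1,2)] Wt[OF pU] r0 by simp
      qed
      thus ?thesis using Wp fd2[OF pU] by simp
    qed
    have d1: "f' p (cmul_i (W' X)) + f'' (cmul_i v) p X = 0"
    proof -
      have "(\<lambda>h. f' p (cmul_i (W' h)) + frechet_derivative (\<lambda>q. f' q (cmul_i (W p))) (at p) h) X = 0"
      proof (rule TK[OF Xt fd_prod[OF U_open pU linf' df'[OF pU] hJW]])
        fix q assume q: "q \<in> U" "dist q p < r0" "\<rho> q = 0"
        show "f' q (cmul_i (W q)) = f' p (cmul_i (W p))" using Wt[OF q(1,2)] Wt[OF pU] r0 by simp
      qed
      thus ?thesis using Wp fd2[OF pU] by simp
    qed
    have e0: "(\<lambda>h. f' p (cmul_i (Z' h)) + frechet_derivative (\<lambda>q. f' q (cmul_i (Z p))) (at p) h) u = 0"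
      if "f' p u = 0" for u
    proof (rule TK[OF that fd_prod[OF U_open pU linf' df'[OF pU] hX]])
      fix q assume q: "q \<in> U" "dist q p < r0" "\<rho> q = 0"
      have "f' q (cmul_i (Z q)) = 0" using iZ_tangent inS[OF q(1,3)] tsp[OF q(1)] by auto
      moreover have "f' p (cmul_i (Z p)) = 0" using iZ_tangent p\<Sigma> tsp[OF pU] by auto
      ultimately show "f' q (cmul_i (Z q)) = f' p (cmul_i (Z p))" by simp
    qed
    have e1: "f' p (cmul_i (Z' v)) + f'' X p v = 0"
      using e0[OF vt(1)] fd2[OF pU] by (simp add: X_def)
    have e2: "f' p (cmul_i (Z' (cmul_i v))) + f'' X p (cmul_i v) = 0"
      using e0[OF vt(2)] fd2[OF pU] by (simp add: X_def)
    define br where "br = W' X - cmul_i (Z' v)"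
    have s1: "f'' v p X = f'' X p v" "f'' (cmul_i v) p X = f'' X p (cmul_i v)" using sym[OF pU] by auto
    have br1: "f' p br = 0"
      using c1 e1 s1 by (simp add: br_def linear_diff[OF lp(1)])
    have br2: "f' p (cmul_i br) = 0"
    proof -
      have "cmul_i br = cmul_i (W' X) - cmul_i (Z' (cmul_i v))"
        using holo by (simp add: br_def cmul_i_diff Z'_def)
      thus ?thesis using d1 e2 s1 by (simp add: linear_diff[OF lp(1)])
    qed
    have "br \<in> cx_tangent \<rho> p" using br1 br2 cxt[OF pU] by auto
    hence "B p br = 0" using \<beta>_kernel p\<Sigma> by (auto simp: cx_tangent_def)
    hence "B p (W' X) = B p (cmul_i (Z' v))" by (simp add: br_def linear_diff[OF lp(2)])
    thus ?thesis using a1 b1 by (simp add: d_form_def X_def)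
  qed
  have ex: "d_form B p (cmul_i (Z p)) u = 0" if p\<Sigma>: "p \<in> \<Sigma>" and u: "u \<in> tangent_sp \<rho> p" for p u
  proof -
    note pU = \<Sigma>U(1)[OF p\<Sigma>]
    define X where "X = cmul_i (Z p)"
    define c where "c = B p u"
    define w where "w = u - c *\<^sub>R X"
    have lp: "linear (f' p)" "linear (B p)" using linf' B_linear pU by auto
    have Xt: "f' p X = 0" using iZ_tangent p\<Sigma> tsp[OF pU] by (auto simp: X_def)
    have ut: "f' p u = 0" using u tsp[OF pU] by auto
    have wt: "w \<in> tangent_sp \<rho> p"
      using Xt ut by (simp add: tsp[OF pU] w_def linear_diff[OF lp(1)] linear_cmul[OF lp(1)])
    have "B p w = 0" using \<beta>_iZ p\<Sigma> by (simp add: w_def X_def c_def linear_diff[OF lp(2)] linear_cmul[OF lp(2)])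
    hence wc: "w \<in> cx_tangent \<rho> p" using \<beta>_kernel p\<Sigma> wt by blast
    have uu: "u = c *\<^sub>R X + w" by (simp add: w_def)
    have "d_form B p X u = c * d_form B p X X + d_form B p X w"
      unfolding uu using d_form_bilin(1)[OF U_open pU B_linear dB[OF pU], of X]
      by (simp add: linear_add linear_cmul)
    also have "\<dots> = 0" using key[OF p\<Sigma> wc] by (simp add: d_form_def X_def)
    finally show ?thesis by (simp add: X_def)
  qed
  show ?thesis
  proof (intro conjI allI impI ballI)
    fix p assume p\<Sigma>: "p \<in> \<Sigma>"
    show "reeb_at \<rho> B p (cmul_i (Z p))"
      unfolding reeb_at_def using iZ_tangent \<beta>_iZ p\<Sigma> ex by blast
  next
    fix R p assume R: "\<forall>p\<in>\<Sigma>. reeb_at \<rho> B p (R p)" and p\<Sigma>: "p \<in> \<Sigma>"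
    note pU = \<Sigma>U(1)[OF p\<Sigma>]
    define X where "X = cmul_i (Z p)"
    define w where "w = R p - X"
    have lp: "linear (f' p)" "linear (B p)" using linf' B_linear pU by auto
    have Xt: "f' p X = 0" using iZ_tangent p\<Sigma> tsp[OF pU] by (auto simp: X_def)
    have Rr: "reeb_at \<rho> B p (R p)" using R p\<Sigma> by blast
    have Rt: "f' p (R p) = 0" using Rr tsp[OF pU] by (auto simp: reeb_at_def)
    have wt: "f' p w = 0" using Xt Rt by (simp add: w_def linear_diff[OF lp(1)])
    have "B p w = 0" using \<beta>_iZ p\<Sigma> Rr by (simp add: w_def X_def reeb_at_def linear_diff[OF lp(2)])
    hence wc: "w \<in> cx_tangent \<rho> p" using \<beta>_kernel p\<Sigma> wt tsp[OF pU] by blast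
    hence jwt: "cmul_i w \<in> tangent_sp \<rho> p" by (simp add: cx_tangent_def)
    have "d_form B p w (cmul_i w) = d_form B p (R p - X) (cmul_i w)" by (simp add: w_def)
    also have "\<dots> = d_form B p (R p) (cmul_i w) - d_form B p X (cmul_i w)"
      by (rule linear_diff[OF d_form_bilin(2)[OF U_open pU B_linear dB[OF pU], of "cmul_i w"]])
    also have "\<dots> = 0" using Rr jwt ex[OF p\<Sigma> jwt] by (simp add: reeb_at_def X_def)
    finally have "w = 0" using strictly_i_convex p\<Sigma> wc by force
    thus "R p = cmul_i (Z p)" by (simp add: w_def X_def)
  qed
qed

end
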